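(* Let $m\ge0$, $n\ge1$, and let $\lambda$ be a partition with $\lambda_1<n$. Then $$\Big\{SP_\lambda(x,y_1,\dots,y_n)\,x^{\rho_m}y^{\rho_n}\Big\}=\Big\{SP_\lambda(x,y_1,\dots,y_{n-1})\,x^{\rho_m}y^{\rho_n}\Big\}.$$ Here $\{\cdot\}$ is the alternation over $S_m\times S_n$ acting on $x_1,\dots,x_m,y_1,\dots,y_n$.
   Context: For $f(x,y)$ with $x=(x_1,\dots,x_m)$ and $y=(y_1,\dots,y_n)$, set $\{f\}=\sum_{w\in S_m\times S_n}\varepsilon(w)w(f)$. Here $S_m$ permutes the $x_i$, $S_n$ permutes the $y_j$, and $\varepsilon$ is the sign. Set $x^{\rho_m}=x_1^{m-1}\cdots x_m^0$ and $y^{\rho_n}=y_1^{n-1}\cdots y_n^0$. For a partition $\mu$ and any lists of variables $x,y$, $SP_\mu(x,y)=\det(h_{\mu_r-r+s}(x,y))_{r,s=1}^{l(\mu)}$, with $SP_\emptyset=1$. The $h_a(x,y)$ are given by $\prod_j(1-ty_j)/\prod_i(1-tx_i)=\sum_{a\ge0}h_a(x,y)t^a$, and $h_a=0$ for $a<0$. *)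

theory Defs
  imports "Jordan_Normal_Form.Determinant" "HOL-Computational_Algebra.Formal_Power_Series"
begin

(* Variables are functions nat => 'a; a list x_1..x_m is x 0, ..., x (m-1). *)

(* formal geometric series 1/(1 - c t) = sum_k c^k t^k *)
definition geom_fps :: "'a::comm_ring_1 \<Rightarrow> 'a fps" where
  "geom_fps c = Abs_fps (\<lambda>k. c ^ k)"

definition h_xy :: "nat \<Rightarrow> (nat \<Rightarrow> 'a::comm_ring_1) \<Rightarrow> nat \<Rightarrow> (nat \<Rightarrow> 'a) \<Rightarrow> int \<Rightarrow> 'a" where
  "h_xy m x n y a =
     (if a < 0 then 0
      else fps_nth ((\<Prod>i<m. geom_fps (x i)) * (\<Prod>j<n. 1 - fps_const (y j) * fps_X)) (nat a))"

definition is_partition :: "nat list \<Rightarrow> bool" where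
  "is_partition lam \<longleftrightarrow> sorted_wrt (\<ge>) lam \<and> 0 \<notin> set lam"

(* SP_lam(x,y) = det (h_{lam_r - r + s})_{r,s=1..l(lam)}, written 0-indexed *)
definition SP :: "nat list \<Rightarrow> nat \<Rightarrow> (nat \<Rightarrow> 'a::comm_ring_1) \<Rightarrow> nat \<Rightarrow> (nat \<Rightarrow> 'a) \<Rightarrow> 'a" where
  "SP lam m x n y =
     det (mat (length lam) (length lam)
       (\<lambda>(r, s). h_xy m x n y (int (lam ! r) - int r + int s)))"

definition rho_mon :: "nat \<Rightarrow> (nat \<Rightarrow> 'a::comm_ring_1) \<Rightarrow> 'a" where
  "rho_mon m x = (\<Prod>i<m. x i ^ (m - 1 - i))"

definition alt :: "nat \<Rightarrow> nat \<Rightarrow> ((nat \<Rightarrow> 'a::comm_ring_1) \<Rightarrow> (nat \<Rightarrow> 'a) \<Rightarrow> 'a)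
                    \<Rightarrow> (nat \<Rightarrow> 'a) \<Rightarrow> (nat \<Rightarrow> 'a) \<Rightarrow> 'a" where
  "alt m n f x y =
     (\<Sum>p\<in>{p. p permutes {..<m}}. \<Sum>q\<in>{q. q permutes {..<n}}.
        of_int (sign p * sign q) * f (x \<circ> p) (y \<circ> q))"

end

theory Submission
  imports Defs
begin


lemma alt_inv_zero:
  fixes G :: "(nat \<Rightarrow> 'a) \<Rightarrow> 'b::comm_ring_1"
  assumes ab: "a < n" "b < n" "a \<noteq> b"
    and inv: "\<And>z. G (z \<circ> Transposition.transpose a b) = G z"
  shows "(\<Sum>q\<in>{q. q permutes {..<n}}. of_int (sign q) * G (y \<circ> q)) = 0"
proof -
  let ?t = "Transposition.transpose a b"
  let ?P = "{q. q permutes {..<n}}"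
  let ?E = "{q\<in>?P. evenperm q}"
  let ?O = "{q\<in>?P. \<not> evenperm q}"
  let ?f = "\<lambda>q. of_int (sign q) * G (y \<circ> q) :: 'b"
  have tp: "?t permutes {..<n}" using ab by (simp add: permutes_swap_id)
  have perm: "q permutes {..<n} \<Longrightarrow> permutation q" for q
    using permutation_permutes by blast
  have tperm: "permutation ?t" using perm tp by blast
  have ev: "q permutes {..<n} \<Longrightarrow> evenperm (q \<circ> ?t) = (\<not> evenperm q)" for q
  proof -
    assume q: "q permutes {..<n}"
    have "evenperm (q \<circ> ?t) = (evenperm q = evenperm ?t)" using evenperm_comp[OF perm[OF q] tperm] .
    moreover have "\<not> evenperm ?t" using ab by (simp add: evenperm_swap)
    ultimately show ?thesis by simp
  qed
  have tt: "q \<circ> ?t \<circ> ?t = q" for q :: "nat \<Rightarrow> nat"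
    by (auto simp: fun_eq_iff)
  have img: "(\<lambda>q. q \<circ> ?t) ` ?E = ?O"
  proof
    show "(\<lambda>q. q \<circ> ?t) ` ?E \<subseteq> ?O"
    proof
      fix r assume "r \<in> (\<lambda>q. q \<circ> ?t) ` ?E"
      then obtain q where q: "q \<in> ?E" and r: "r = q \<circ> ?t" by blast
      have "r permutes {..<n}" unfolding r using permutes_compose[OF tp] q by blast
      moreover have "\<not> evenperm r" using ev q r by blast
      ultimately show "r \<in> ?O" by blast
    qed
    show "?O \<subseteq> (\<lambda>q. q \<circ> ?t) ` ?E"
    proof
      fix q assume q: "q \<in> ?O"
      have "q \<circ> ?t permutes {..<n}" using permutes_compose[OF tp] q by blast
      moreover have "evenperm (q \<circ> ?t)" using ev q by blast
      ultimately have "q \<circ> ?t \<in> ?E" by blast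
      then show "q \<in> (\<lambda>q. q \<circ> ?t) ` ?E"
        by (rule image_eqI[rotated]) (simp add: tt)
    qed
  qed
  have inj: "inj_on (\<lambda>q. q \<circ> ?t) ?E"
    by (rule inj_onI) (metis tt)
  have fin: "finite ?P" using finite_permutations[of "{..<n}"] by simp
  have PEO: "sum ?f ?P = sum ?f (?E \<union> ?O)" by (rule arg_cong[where f="sum ?f"]) blast
  have "sum ?f ?P = sum ?f ?E + sum ?f ?O"
    unfolding PEO by (rule sum.union_disjoint) (use fin in auto)
  also have "sum ?f ?O = sum (?f \<circ> (\<lambda>q. q \<circ> ?t)) ?E"
    using sum.reindex[OF inj, of ?f] img by simp
  also have "\<dots> = sum (\<lambda>q. - ?f q) ?E"
  proof (rule sum.cong)
    fix q assume q: "q \<in> ?E"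
    have "sign (q \<circ> ?t) = - sign q"
      using q ev by (simp add: sign_def)
    moreover have "G (y \<circ> (q \<circ> ?t)) = G (y \<circ> q)"
      using inv[of "y \<circ> q"] by (simp add: comp_assoc)
    ultimately show "(?f \<circ> (\<lambda>q. q \<circ> ?t)) q = - ?f q" by simp
  qed simp
  also have "sum ?f ?E + sum (\<lambda>q. - ?f q) ?E = 0"
    by (simp only: sum_negf) simp
  finally show ?thesis .
qed



lemma h_neg: "a < 0 \<Longrightarrow> h_xy m x n y a = 0"
  by (simp add: h_xy_def)

lemma h_step: "h_xy m x (Suc k) y b = h_xy m x k y b - y k * h_xy m x k y (b-1)"
proof (cases "b < 0")
  case True then show ?thesis by (simp add: h_xy_def)
next
  case False
  define F where "F = (\<Prod>i<m. geom_fps (x i)) * (\<Prod>j<k. 1 - fps_const (y j) * fps_X)"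
  have "(\<Prod>i<m. geom_fps (x i)) * (\<Prod>j<Suc k. 1 - fps_const (y j) * fps_X)
        = F - fps_const (y k) * (F * fps_X)"
    by (simp add: F_def algebra_simps)
  then have "h_xy m x (Suc k) y b = fps_nth (F - fps_const (y k) * (F * fps_X)) (nat b)"
    using False by (simp add: h_xy_def)
  also have "\<dots> = fps_nth F (nat b) - y k * (if nat b = 0 then 0 else fps_nth F (nat b - 1))"
    by simp
  also have "\<dots> = h_xy m x k y b - y k * h_xy m x k y (b-1)"
    using False by (auto simp: h_xy_def F_def nat_diff_distrib')
  finally show ?thesis .
qed

lemma h_iter1:
  "h_xy m x k y (a + int s) = y k ^ s * h_xy m x k y a
     + (\<Sum>j\<in>{1..s}. y k ^ (s-j) * h_xy m x (Suc k) y (a + int j))"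
proof (induction s)
  case 0 then show ?case by simp
next
  case (Suc s)
  have e: "h_xy m x k y (a + int (Suc s)) = h_xy m x (Suc k) y (a + int (Suc s)) + y k * h_xy m x k y (a + int s)"
    using h_step[of m x k y "a + int (Suc s)"] by simp
  have s: "(\<Sum>j\<in>{1..Suc s}. y k ^ (Suc s-j) * h_xy m x (Suc k) y (a + int j))
     = h_xy m x (Suc k) y (a + int (Suc s)) + y k * (\<Sum>j\<in>{1..s}. y k ^ (s-j) * h_xy m x (Suc k) y (a + int j))"
  proof -
    have "(\<Sum>j\<in>{1..Suc s}. y k ^ (Suc s-j) * h_xy m x (Suc k) y (a + int j))
       = h_xy m x (Suc k) y (a + int (Suc s)) + (\<Sum>j\<in>{1..s}. y k ^ (Suc s-j) * h_xy m x (Suc k) y (a + int j))"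
      by (simp add: add.commute)
    also have "(\<Sum>j\<in>{1..s}. y k ^ (Suc s-j) * h_xy m x (Suc k) y (a + int j))
       = y k * (\<Sum>j\<in>{1..s}. y k ^ (s-j) * h_xy m x (Suc k) y (a + int j))"
      by (simp add: sum_distrib_left Suc_diff_le mult.assoc)
    finally show ?thesis .
  qed
  show ?case unfolding e s Suc by (simp add: algebra_simps)
qed

lemma h_iter2:
  "h_xy m x k y c = (\<Sum>i<s. y k ^ i * h_xy m x (Suc k) y (c - int i))
     + y k ^ s * h_xy m x k y (c - int s)"
proof (induction s)
  case 0 then show ?case by simp
next
  case (Suc s)
  have e: "h_xy m x k y (c - int s) = h_xy m x (Suc k) y (c - int s) + y k * h_xy m x k y (c - int (Suc s))"
    using h_step[of m x k y "c - int s"] by (simp add: algebra_simps)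
  show ?case using Suc unfolding e by (simp add: algebra_simps)
qed

lemma h_perm: "q permutes {..<n} \<Longrightarrow> h_xy m x n (y \<circ> q) a = h_xy m x n y a"
  unfolding h_xy_def
  using prod.permute[of q "{..<n}" "\<lambda>j. 1 - fps_const (y j) * fps_X"]
  by (simp add: comp_def)

definition Mmat :: "nat list \<Rightarrow> nat \<Rightarrow> (nat \<Rightarrow> 'a::comm_ring_1) \<Rightarrow> nat \<Rightarrow> (nat \<Rightarrow> 'a) \<Rightarrow> 'a mat" where
  "Mmat lam m x n y = mat (length lam) (length lam)
       (\<lambda>(r, s). h_xy m x n y (int (lam ! r) - int r + int s))"

definition Ecoef :: "nat list \<Rightarrow> nat \<Rightarrow> (nat \<Rightarrow> 'a::comm_ring_1) \<Rightarrow> nat \<Rightarrow> (nat \<Rightarrow> 'a) \<Rightarrow> nat \<Rightarrow> 'a" where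
  "Ecoef lam m x n y i = (\<Sum>r<length lam. h_xy m x n y (int (lam ! r) - int r - int i)
        * cofactor (Mmat lam m x n y) r 0)"

lemma SP_Mmat: "SP lam m x n y = det (Mmat lam m x n y)"
  by (simp add: SP_def Mmat_def)

lemma Ecoef_0: "lam \<noteq> [] \<Longrightarrow> Ecoef lam m x n y 0 = SP lam m x n y"
  unfolding SP_Mmat Ecoef_def
  by (subst laplace_expansion_column[of _ "length lam" 0]) (auto simp: Mmat_def)

lemma SP_decomp:
  fixes x y :: "nat \<Rightarrow> 'a::comm_ring_1"
  assumes ne: "lam \<noteq> []" and bnd: "\<forall>v\<in>set lam. v < Suc k"
  shows "SP lam m x k y = (\<Sum>i<Suc k. y k ^ i * Ecoef lam m x (Suc k) y i)"
proof -
  let ?l = "length lam"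
  let ?t = "y k"
  let ?Hk = "h_xy m x k y" and ?Hn = "h_xy m x (Suc k) y"
  define M where "M = Mmat lam m x (Suc k) y"
  define N where "N = Mmat lam m x k y"
  define A where "A = mat ?l ?l (\<lambda>(r,s). if s = 0 then ?Hk (int (lam ! r) - int r)
                        else ?Hn (int (lam ! r) - int r + int s))"
  define U where "U = mat ?l ?l (\<lambda>(j,s). if j \<le> s then ?t ^ (s - j) else 0)"
  have A: "A \<in> carrier_mat ?l ?l" and U: "U \<in> carrier_mat ?l ?l"
    by (auto simp: A_def U_def)
  have l0: "0 < ?l" using ne by simp
  have NAU: "N = A * U"
  proof (rule eq_matI)
    fix r s assume r: "r < dim_row (A * U)" and s: "s < dim_col (A * U)"
    then have r: "r < ?l" and s: "s < ?l" using A U by auto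
    let ?a = "int (lam ! r) - int r"
    let ?g = "\<lambda>j. (if j = 0 then ?Hk ?a else ?Hn (?a + int j)) * (?t ^ (s - j))"
    have "(A * U) $$ (r, s) = (\<Sum>j<?l. A $$ (r, j) * U $$ (j, s))"
      using r s A U by (simp add: scalar_prod_def lessThan_atLeast0)
    also have "\<dots> = (\<Sum>j<?l. if j \<le> s then ?g j else 0)"
      by (rule sum.cong) (auto simp: A_def U_def r s)
    also have "\<dots> = (\<Sum>j\<in>{..s}. ?g j)"
    proof -
      have e: "{j\<in>{..<?l}. j \<le> s} = {..s}" using s by auto
      have "(\<Sum>j<?l. if j \<le> s then ?g j else 0) = sum ?g {j\<in>{..<?l}. j \<le> s}"
        by (rule sum.inter_filter[symmetric]) simp
      then show ?thesis by (simp only: e)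
    qed
    also have "\<dots> = ?g 0 + (\<Sum>j\<in>{1..s}. ?g j)"
      by (simp add: atMost_atLeast0 sum.atLeast_Suc_atMost)
    also have "\<dots> = ?t ^ s * ?Hk ?a + (\<Sum>j\<in>{1..s}. ?t ^ (s - j) * ?Hn (?a + int j))"
      by (auto simp: mult.commute intro!: sum.cong)
    also have "\<dots> = ?Hk (?a + int s)" by (rule h_iter1[symmetric])
    also have "\<dots> = N $$ (r, s)" using r s by (simp add: N_def Mmat_def)
    finally show "N $$ (r, s) = (A * U) $$ (r, s)" ..
  qed (use A U in \<open>auto simp: N_def Mmat_def\<close>)
  have detU: "det U = 1"
  proof -
    have "upper_triangular U" by (auto simp: upper_triangular_def U_def)
    then have "det U = prod_list (diag_mat U)" using det_upper_triangular U by blast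
    also have "diag_mat U = map (\<lambda>i. 1) [0..<?l]"
      by (auto simp: diag_mat_def U_def)
    finally show ?thesis by (simp add: map_replicate_const)
  qed
  have cof: "cofactor A r 0 = cofactor M r 0" for r
    unfolding cofactor_def mat_delete_def
    by (rule arg_cong[where f="\<lambda>B. _ * det B"], rule eq_matI)
       (auto simp: A_def M_def Mmat_def)
  have "SP lam m x k y = det A"
    using det_mult[OF A U] detU by (simp add: SP_Mmat N_def[symmetric] NAU)
  also have "\<dots> = (\<Sum>r<?l. A $$ (r, 0) * cofactor A r 0)"
    using laplace_expansion_column[OF A l0] .
  also have "\<dots> = (\<Sum>r<?l. (\<Sum>i<Suc k. ?t ^ i * ?Hn (int (lam ! r) - int r - int i)) * cofactor M r 0)"
  proof (rule sum.cong)
    fix r assume r: "r \<in> {..<?l}"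
    have "lam ! r < Suc k" using bnd r by auto
    then have z: "?Hk (int (lam ! r) - int r - int (Suc k)) = 0" by (intro h_neg) simp
    show "A $$ (r, 0) * cofactor A r 0 = (\<Sum>i<Suc k. ?t ^ i * ?Hn (int (lam ! r) - int r - int i)) * cofactor M r 0"
    proof -
      have a0: "A $$ (r,0) = ?Hk (int (lam ! r) - int r)" using r l0 by (simp add: A_def)
      show ?thesis unfolding a0 cof using h_iter2[of m x k y "int (lam ! r) - int r" "Suc k"] z
        by simp
    qed
  qed simp
  also have "\<dots> = (\<Sum>i<Suc k. ?t ^ i * Ecoef lam m x (Suc k) y i)"
    unfolding Ecoef_def M_def sum_distrib_left sum_distrib_right
    by (subst sum.swap) (simp add: mult.assoc)
  finally show ?thesis .
qed



lemma rho_swap: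
  fixes z :: "nat \<Rightarrow> 'a::comm_ring_1"
  assumes e: "0 < e" "e \<le> b"
  shows "z (b-e) ^ e * (\<Prod>j<Suc b. z (Transposition.transpose (b-e) b j) ^ (b - j))
       = z b ^ e * (\<Prod>j<Suc b. z j ^ (b - j))"
proof -
  let ?t = "Transposition.transpose (b-e) b"
  have tp: "?t permutes {..<Suc b}" by (rule permutes_swap_id) auto
  have P: "(\<Prod>j<Suc b. z (?t j) ^ (b-j)) = (\<Prod>j<Suc b. z j ^ (b - ?t j))"
    using prod.permute[OF tp, of "\<lambda>j. z j ^ (b - ?t j)"] by (simp add: comp_def)
  have D: "z c ^ e = (\<Prod>j<Suc b. z j ^ (if j = c then e else 0))" if c: "c < Suc b" for c
  proof -
    have "(\<Prod>j<Suc b. z j ^ (if j = c then e else 0)) = (\<Prod>j<Suc b. if j = c then z j ^ e else 1)"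
      by (rule prod.cong) auto
    also have "\<dots> = z c ^ e" using c by simp
    finally show ?thesis by simp
  qed
  have L: "z (b-e) ^ e * (\<Prod>j<Suc b. z j ^ (b - ?t j))
      = (\<Prod>j<Suc b. z j ^ ((if j = b - e then e else 0) + (b - ?t j)))"
  proof -
    have Db: "z (b-e) ^ e = (\<Prod>j<Suc b. z j ^ (if j = b - e then e else 0))" using e by (intro D) simp
    show ?thesis unfolding Db by (simp only: prod.distrib[symmetric] power_add[symmetric])
  qed
  have R: "z b ^ e * (\<Prod>j<Suc b. z j ^ (b - j))
      = (\<Prod>j<Suc b. z j ^ ((if j = b then e else 0) + (b - j)))"
  proof -
    have Db: "z b ^ e = (\<Prod>j<Suc b. z j ^ (if j = b then e else 0))" using e by (intro D) simp
    show ?thesis unfolding Db by (simp only: prod.distrib[symmetric] power_add[symmetric])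
  qed
  have "(\<Prod>j<Suc b. z j ^ ((if j = b - e then e else 0) + (b - ?t j)))
      = (\<Prod>j<Suc b. z j ^ ((if j = b then e else 0) + (b - j)))"
  proof (rule prod.cong)
    fix j assume j: "j \<in> {..<Suc b}"
    show "z j ^ ((if j = b - e then e else 0) + (b - ?t j)) = z j ^ ((if j = b then e else 0) + (b - j))"
      using e j by (cases "j = b - e"; cases "j = b") (auto simp: transpose_def)
  qed simp
  then show ?thesis using L R P by simp
qed

lemma alt_add_sum:
  "alt m n (\<lambda>x y. f x y + (\<Sum>i\<in>I. g i x y)) x y = alt m n f x y + (\<Sum>i\<in>I. alt m n (g i) x y)"
  unfolding alt_def
  by (simp add: distrib_left sum.distrib sum_distrib_left sum.swap[of _ I])


lemma Ecoef_perm: "q permutes {..<n} \<Longrightarrow> Ecoef lam m x n (y \<circ> q) i = Ecoef lam m x n y i"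
  unfolding Ecoef_def Mmat_def by (simp add: h_perm)

theorem lemma2p3:
  fixes m n :: nat and lam :: "nat list" and x y :: "nat \<Rightarrow> 'a::comm_ring_1"
  assumes "n \<ge> 1" and "is_partition lam" and "\<forall>k\<in>set lam. k < n"
  shows "alt m n (\<lambda>x' y'. SP lam m x' n y' * rho_mon m x' * rho_mon n y') x y
       = alt m n (\<lambda>x' y'. SP lam m x' (n - 1) y' * rho_mon m x' * rho_mon n y') x y"
proof (cases "lam = []")
  case True
  have "SP lam m x' n y' = SP lam m x' (n-1) y'" for x' y' :: "nat \<Rightarrow> 'a"
    unfolding True SP_def by (rule arg_cong[where f=det], rule eq_matI) auto
  then show ?thesis by simp
next
  case False
  obtain k where n: "n = Suc k" using assms(1) by (cases n) auto
  define G where "G i x' y' = y' k ^ Suc i * Ecoef lam m x' n y' (Suc i) * rho_mon m x' * rho_mon n y'"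
    for i and x' y' :: "nat \<Rightarrow> 'a"
  have dec: "SP lam m x' (n-1) y' * rho_mon m x' * rho_mon n y'
      = SP lam m x' n y' * rho_mon m x' * rho_mon n y' + (\<Sum>i<k. G i x' y')" for x' y' :: "nat \<Rightarrow> 'a"
  proof -
    have "SP lam m x' k y' = (\<Sum>i<Suc k. y' k ^ i * Ecoef lam m x' (Suc k) y' i)"
      using SP_decomp[OF False, of k m x' y'] assms(3) n by auto
    also have "\<dots> = y' k ^ 0 * Ecoef lam m x' (Suc k) y' 0 + (\<Sum>i<k. y' k ^ Suc i * Ecoef lam m x' (Suc k) y' (Suc i))"
      by (rule sum.lessThan_Suc_shift)
    finally have "SP lam m x' k y' = SP lam m x' n y' + (\<Sum>i<k. y' k ^ Suc i * Ecoef lam m x' n y' (Suc i))"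
      using Ecoef_0[OF False] n by simp
    then show ?thesis by (simp add: G_def n ring_distribs sum_distrib_left sum_distrib_right mult_ac)
  qed
  have eqf: "(\<lambda>x' y'. SP lam m x' (n - 1) y' * rho_mon m x' * rho_mon n y')
      = (\<lambda>x' y'. SP lam m x' n y' * rho_mon m x' * rho_mon n y' + (\<Sum>i<k. G i x' y'))"
    using dec by (intro ext) simp
  have z: "alt m n (G i) x y = 0" if i: "i < k" for i
  proof -
    let ?t = "Transposition.transpose (k - Suc i) k"
    have inv: "G i x' (z \<circ> ?t) = G i x' z" for x' z
    proof -
      have tp: "?t permutes {..<n}" using n by (intro permutes_swap_id) auto
      have r: "rho_mon n (z \<circ> ?t) = (\<Prod>j<Suc k. z (?t j) ^ (k - j))"
        and r2: "rho_mon n z = (\<Prod>j<Suc k. z j ^ (k - j))"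
        unfolding rho_mon_def n by simp_all
      have H: "z (k - Suc i) ^ Suc i * rho_mon n (z \<circ> ?t) = z k ^ Suc i * rho_mon n z"
        unfolding r r2 using i by (intro rho_swap) auto
      have "G i x' (z \<circ> ?t) = rho_mon m x' * Ecoef lam m x' n z (Suc i) * (z (k - Suc i) ^ Suc i * rho_mon n (z \<circ> ?t))"
        unfolding G_def Ecoef_perm[OF tp] by (simp only: comp_apply transpose_apply_second mult_ac)
      also have "\<dots> = rho_mon m x' * Ecoef lam m x' n z (Suc i) * (z k ^ Suc i * rho_mon n z)"
        by (simp only: H)
      also have "\<dots> = G i x' z" unfolding G_def by (simp only: mult_ac)
      finally show ?thesis .
    qed
    show ?thesis unfolding alt_def
    proof (rule sum.neutral, rule ballI)
      fix p assume "p \<in> {p. p permutes {..<m}}"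
      have "(\<Sum>q\<in>{q. q permutes {..<n}}. of_int (sign p * sign q) * G i (x \<circ> p) (y \<circ> q))
          = of_int (sign p) * (\<Sum>q\<in>{q. q permutes {..<n}}. of_int (sign q) * G i (x \<circ> p) (y \<circ> q))"
        by (simp add: sum_distrib_left mult.assoc)
      also have "(\<Sum>q\<in>{q. q permutes {..<n}}. of_int (sign q) * G i (x \<circ> p) (y \<circ> q)) = 0"
        by (rule alt_inv_zero[where a="k - Suc i" and b=k and G="G i (x \<circ> p)", OF _ _ _ inv[of "x \<circ> p"]]) (use i n in auto)
      finally show "(\<Sum>q\<in>{q. q permutes {..<n}}. of_int (sign p * sign q) * G i (x \<circ> p) (y \<circ> q)) = 0"
        by (simp only: mult_zero_right)
    qed
  qed
  have s0: "(\<Sum>i<k. alt m n (G i) x y) = 0"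
    by (rule sum.neutral) (use z in blast)
  show ?thesis unfolding eqf alt_add_sum s0 by (rule add_0_right[symmetric])
qed

end
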